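(* Let $G=H\langle a\rangle$ be a finite group, where $H$ is a normal abelian subgroup of $G$ and the order of $a$ is coprime to $|H|$. Then $\mathcal R(a)=[H,a]$.
   Context: Commutators: $[x,y]=x^{-1}y^{-1}xy$, left-normed, and $[x,{}_n\,y]=[x,y,\dots,y]$ with $y$ repeated $n$ times. $\mathcal R(a)$ denotes the minimal right Engel sink of $a$ in $G$: the smallest subset of $G$ such that for every $x\in G$ the commutators $[a,{}_n\,x]$ lie in it for all sufficiently large $n$ (for finite $G$ it exists). $[H,a]$ denotes the subgroup generated by all $h^{-1}h^{a}$, $h\in H$. *)

theory Defs
  imports "HOL-Algebra.Algebra"
begin

definition commutator :: "('a, 'b) monoid_scheme \<Rightarrow> 'a \<Rightarrow> 'a \<Rightarrow> 'a" where
  "commutator G x y = inv\<^bsub>G\<^esub> x \<otimes>\<^bsub>G\<^esub> inv\<^bsub>G\<^esub> y \<otimes>\<^bsub>G\<^esub> x \<otimes>\<^bsub>G\<^esub> y"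

fun engel_comm :: "('a, 'b) monoid_scheme \<Rightarrow> 'a \<Rightarrow> nat \<Rightarrow> 'a \<Rightarrow> 'a" where
  "engel_comm G a 0 x = a"
| "engel_comm G a (Suc n) x = commutator G (engel_comm G a n x) x"

definition right_engel_sink :: "('a, 'b) monoid_scheme \<Rightarrow> 'a \<Rightarrow> 'a set \<Rightarrow> bool" where
  "right_engel_sink G a S \<longleftrightarrow> S \<subseteq> carrier G \<and>
     (\<forall>x\<in>carrier G. \<exists>N. \<forall>n\<ge>N. engel_comm G a n x \<in> S)"

definition min_right_engel_sink :: "('a, 'b) monoid_scheme \<Rightarrow> 'a \<Rightarrow> 'a set" where
  "min_right_engel_sink G a =
     (THE S. right_engel_sink G a S \<and> (\<forall>T. right_engel_sink G a T \<longrightarrow> S \<subseteq> T))"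

definition comm_subgroup_elem :: "('a, 'b) monoid_scheme \<Rightarrow> 'a set \<Rightarrow> 'a \<Rightarrow> 'a set" where
  "comm_subgroup_elem G H a =
     generate G {inv\<^bsub>G\<^esub> h \<otimes>\<^bsub>G\<^esub> (inv\<^bsub>G\<^esub> a \<otimes>\<^bsub>G\<^esub> h \<otimes>\<^bsub>G\<^esub> a) | h. h \<in> H}"

end

theory Submission
  imports Defs
begin

lemma funpow_inj_aux:
  assumes "\<forall>x\<in>S. f x \<in> S" "inj_on f S"
  shows "x \<in> S \<Longrightarrow> y \<in> S \<Longrightarrow> (f^^i) x = (f^^i) y \<Longrightarrow> x = y"
proof (induction i arbitrary: x y)
  case 0 then show ?case by simp
next
  case (Suc i)
  have "(f^^i) (f x) = (f^^i) (f y)" using Suc.prems(3) by (simp add: funpow_Suc_right del: funpow.simps)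
  then have "f x = f y" using Suc.IH assms Suc.prems by blast
  then show ?case using assms(2) Suc.prems inj_on_def by metis
qed

lemma funpow_in:
  assumes "\<forall>x\<in>S. f x \<in> S" "k \<in> S" shows "(f^^n) k \<in> S"
  using assms by (induction n) auto

lemma periodic_aux:
  assumes "finite S" "\<forall>x\<in>S. f x \<in> S" "inj_on f S" "k \<in> S"
  shows "\<exists>p>0. (f^^p) k = k"
proof -
  define g where "g n = (f^^n) k" for n
  have sub: "g ` {..card S} \<subseteq> S" using funpow_in[OF assms(2,4)] g_def by auto
  have "\<not> inj_on g {..card S}"
  proof
    assume "inj_on g {..card S}"
    then have "card (g ` {..card S}) = Suc (card S)" by (simp add: card_image)
    moreover have "card (g ` {..card S}) \<le> card S" using sub assms(1) card_mono by blast
    ultimately show False by simp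
  qed
  then obtain i j where ij: "i \<noteq> j" "g i = g j" unfolding inj_on_def by blast
  have "\<exists>i j. i < j \<and> g i = g j"
    using ij by (metis linorder_neqE_nat)
  then obtain i j where ij: "i < j" "g i = g j" by blast
  have "(f^^i) ((f^^(j-i)) k) = (f^^j) k"
    using ij(1) by (metis funpow_add le_add_diff_inverse2 less_imp_le o_apply add.commute)
  then have "(f^^i) ((f^^(j-i)) k) = (f^^i) k" using ij(2) g_def by simp
  then have "(f^^(j-i)) k = k"
    using funpow_inj_aux[OF assms(2,3)] funpow_in[OF assms(2,4)] assms(4) by blast
  then show ?thesis using ij(1) by (intro exI[of _ "j-i"]) auto
qed

lemma funpow_mult_period:
  assumes "(f^^p) k = k" shows "(f^^(p*N)) k = k"
proof (induction N)
  case 0 then show ?case by simp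
next
  case (Suc N)
  have "(f^^(p*Suc N)) k = (f^^p) ((f^^(p*N)) k)"
    by (simp add: funpow_add)
  then show ?case using Suc assms by simp
qed

locale engel_setup = group G for G (structure) +
  fixes H and a
  assumes nH: "H \<lhd> G"
    and ab: "\<And>x y. x \<in> H \<Longrightarrow> y \<in> H \<Longrightarrow> x \<otimes> y = y \<otimes> x"
    and aG: "a \<in> carrier G"
    and dec: "carrier G = H <#> generate G {a}"
    and cop: "coprime (ord a) (card H)"
    and fin: "finite (carrier G)"
begin

lemma cancel1 [simp]: "x \<in> carrier G \<Longrightarrow> y \<in> carrier G \<Longrightarrow> x \<otimes> (inv x \<otimes> y) = y"
  by (simp flip: m_assoc)
lemma cancel2 [simp]: "x \<in> carrier G \<Longrightarrow> y \<in> carrier G \<Longrightarrow> inv x \<otimes> (x \<otimes> y) = y"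
  by (simp flip: m_assoc)

definition phi where "phi y = inv a \<otimes> y \<otimes> a"
definition d where "d y = inv y \<otimes> phi y"
definition S where "S = d ` H"

lemma subH: "subgroup H G" using nH normal_imp_subgroup by blast
lemma HG: "H \<subseteq> carrier G" using subH subgroup.subset by blast
lemma HGx: "x \<in> H \<Longrightarrow> x \<in> carrier G" using HG by blast
lemma Hinv: "x \<in> H \<Longrightarrow> inv x \<in> H" by (rule subgroup.m_inv_closed[OF subH])
lemma Hmul: "x \<in> H \<Longrightarrow> y \<in> H \<Longrightarrow> x \<otimes> y \<in> H" by (rule subgroup.m_closed[OF subH])
lemma Hone: "\<one> \<in> H" by (rule subgroup.one_closed[OF subH])

lemma phi_H: "y \<in> H \<Longrightarrow> phi y \<in> H"
  unfolding phi_def by (rule normal.inv_op_closed1[OF nH aG])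

lemma phi_G: "y \<in> carrier G \<Longrightarrow> phi y \<in> carrier G"
  unfolding phi_def using aG by simp

lemma d_H: "y \<in> H \<Longrightarrow> d y \<in> H"
  unfolding d_def
  by (rule subgroup.m_closed[OF subH subgroup.m_inv_closed[OF subH] phi_H])

lemma phi_mult: "x \<in> carrier G \<Longrightarrow> y \<in> carrier G \<Longrightarrow> phi (x \<otimes> y) = phi x \<otimes> phi y"
  unfolding phi_def using aG by (simp add: m_assoc)

lemma phi_inv: "x \<in> carrier G \<Longrightarrow> phi (inv x) = inv (phi x)"
proof -
  assume x: "x \<in> carrier G"
  have "phi (inv x) \<otimes> phi x = \<one>"
    using x phi_mult[of "inv x" x] unfolding phi_def using aG by simp
  then show ?thesis using x phi_G by (simp add: inv_equality)
qed

lemma d_mult: "x \<in> H \<Longrightarrow> y \<in> H \<Longrightarrow> d (x \<otimes> y) = d x \<otimes> d y"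
proof -
  assume x: "x \<in> H" and y: "y \<in> H"
  have xg: "x \<in> carrier G" and yg: "y \<in> carrier G" using x y HGx by auto
  have "d (x \<otimes> y) = inv y \<otimes> (inv x \<otimes> phi x) \<otimes> phi y"
    unfolding d_def using xg yg phi_G by (simp add: phi_mult inv_mult_group m_assoc)
  also have "inv y \<otimes> (inv x \<otimes> phi x) = (inv x \<otimes> phi x) \<otimes> inv y"
    using ab[OF d_H[OF x] Hinv[OF y]] unfolding d_def by (rule sym)
  also have "(inv x \<otimes> phi x) \<otimes> inv y \<otimes> phi y = d x \<otimes> d y"
    unfolding d_def using xg yg phi_G by (simp add: m_assoc)
  finally show ?thesis .
qed

lemma d_one: "d \<one> = \<one>"
  unfolding d_def phi_def using aG by simp

lemma d_inv: "x \<in> H \<Longrightarrow> d (inv x) = inv (d x)"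
proof -
  assume x: "x \<in> H"
  have xi: "inv x \<in> H" using x by (rule Hinv)
  have xc: "x \<in> carrier G" using x by (rule HGx)
  have "d (inv x) \<otimes> d x = d (inv x \<otimes> x)" using d_mult[OF xi x] by (rule sym)
  also have "\<dots> = \<one>" using xc d_one by simp
  finally have e: "d (inv x) \<otimes> d x = \<one>" .
  show ?thesis by (rule inv_equality[OF e HGx[OF d_H[OF x]] HGx[OF d_H[OF xi]], symmetric])
qed

lemma S_sub: "subgroup S G"
proof (rule subgroupI)
  show "S \<subseteq> carrier G" unfolding S_def using d_H HGx by blast
  have "\<one> \<in> H" by (rule Hone)
  then have "d \<one> \<in> S" unfolding S_def by (rule imageI)
  then show "S \<noteq> {}" by blast
next
  fix x assume "x \<in> S"
  then obtain u where u: "u \<in> H" "x = d u" unfolding S_def by blast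
  have "inv u \<in> H" using u(1) by (rule Hinv)
  then have "d (inv u) \<in> S" unfolding S_def by (rule imageI)
  then show "inv x \<in> S" using d_inv[OF u(1)] u(2) by simp
next
  fix x y assume "x \<in> S" "y \<in> S"
  then obtain u v where uv: "u \<in> H" "v \<in> H" "x = d u" "y = d v" unfolding S_def by blast
  have "u \<otimes> v \<in> H" using uv(1,2) by (rule Hmul)
  then have "d (u \<otimes> v) \<in> S" unfolding S_def by (rule imageI)
  then show "x \<otimes> y \<in> S" using d_mult[OF uv(1,2)] uv by simp
qed

lemma SG: "x \<in> S \<Longrightarrow> x \<in> carrier G" by (rule subgroup.mem_carrier[OF S_sub])
lemma Sinv: "x \<in> S \<Longrightarrow> inv x \<in> S" by (rule subgroup.m_inv_closed[OF S_sub])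
lemma Smul: "x \<in> S \<Longrightarrow> y \<in> S \<Longrightarrow> x \<otimes> y \<in> S" by (rule subgroup.m_closed[OF S_sub])
lemma Sone: "\<one> \<in> S" by (rule subgroup.one_closed[OF S_sub])

lemma SH: "S \<subseteq> H" unfolding S_def using d_H by blast

lemma comm_eq: "comm_subgroup_elem G H a = S"
proof -
  have e: "{inv h \<otimes> (inv a \<otimes> h \<otimes> a) | h. h \<in> H} = S"
    unfolding S_def d_def phi_def by auto
  have "generate G S \<subseteq> S" by (rule generate_subgroup_incl[OF order_refl S_sub])
  moreover have "S \<subseteq> generate G S" by (auto intro: generate.incl)
  ultimately have "generate G S = S" by (rule subset_antisym)
  then show ?thesis unfolding comm_subgroup_elem_def e .
qed

lemma genG: "g \<in> generate G {a} \<Longrightarrow> g \<in> carrier G"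
  by (rule generate_in_carrier[of "{a}"]) (use aG in auto)

lemma commute_gen: "g \<in> generate G {a} \<Longrightarrow> a \<otimes> g = g \<otimes> a"
proof (induction rule: generate.induct)
  case one then show ?case using aG by simp
next
  case (incl h) then show ?case by simp
next
  case (inv h) then show ?case using aG by (simp add: inv_comm)
next
  case (eng g1 g2)
  have c: "g1 \<in> carrier G" "g2 \<in> carrier G"
    using eng.hyps by (auto intro: genG)
  have "a \<otimes> (g1 \<otimes> g2) = g1 \<otimes> (a \<otimes> g2)" using eng.IH(1) c aG by (simp flip: m_assoc)
  also have "\<dots> = g1 \<otimes> g2 \<otimes> a" using eng.IH(2) c aG by (simp add: m_assoc)
  finally show ?case .
qed

lemma phi_d: "y \<in> carrier G \<Longrightarrow> phi (d y) = d (phi y)"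
  unfolding d_def using phi_G by (simp add: phi_mult phi_inv)

lemma phi_S: "k \<in> S \<Longrightarrow> phi k \<in> S"
  unfolding S_def using phi_d phi_H HGx by auto

lemma phiinv_S: "k \<in> S \<Longrightarrow> a \<otimes> k \<otimes> inv a \<in> S"
proof -
  assume "k \<in> S"
  then obtain y where y: "y \<in> H" "k = d y" unfolding S_def by blast
  define z where "z = a \<otimes> y \<otimes> inv a"
  have zH: "z \<in> H" unfolding z_def using normal.inv_op_closed2[OF nH aG y(1)] .
  have yg: "y \<in> carrier G" using y HGx by auto
  have "phi z = y" unfolding phi_def z_def using aG yg by (simp add: m_assoc)
  then have "d z = inv z \<otimes> y" unfolding d_def by simp
  also have "\<dots> = a \<otimes> k \<otimes> inv a"
    unfolding z_def y(2) d_def phi_def using aG yg by (simp add: inv_mult_group m_assoc)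
  finally show ?thesis using zH unfolding S_def by (metis image_eqI)
qed

lemma conj_S: "g \<in> generate G {a} \<Longrightarrow> k \<in> S \<Longrightarrow> inv g \<otimes> k \<otimes> g \<in> S"
proof (induction arbitrary: k rule: generate.induct)
  case one then show ?case using SG by simp
next
  case (incl h) then show ?case using phi_S unfolding phi_def by simp
next
  case (inv h) then show ?case using phiinv_S aG by simp
next
  case (eng g1 g2)
  have c: "g1 \<in> carrier G" "g2 \<in> carrier G"
    using eng.hyps by (auto intro: genG)
  have kc: "k \<in> carrier G" using eng.prems by (rule SG)
  have "inv (g1 \<otimes> g2) \<otimes> k \<otimes> (g1 \<otimes> g2) = inv g2 \<otimes> (inv g1 \<otimes> k \<otimes> g1) \<otimes> g2"
    using c kc by (simp add: inv_mult_group m_assoc)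
  then show ?case using eng by simp
qed

lemma decomp: "x \<in> carrier G \<Longrightarrow> \<exists>h\<in>H. \<exists>g\<in>generate G {a}. x = h \<otimes> g"
proof -
  assume "x \<in> carrier G"
  then have "x \<in> H <#> generate G {a}" using dec by simp
  then show ?thesis unfolding set_mult_def by auto
qed

lemma comm_a: "x \<in> carrier G \<Longrightarrow> commutator G a x \<in> S"
proof -
  assume "x \<in> carrier G"
  then obtain h g where hg: "h \<in> H" "g \<in> generate G {a}" "x = h \<otimes> g" using decomp by blast
  have hc: "h \<in> carrier G" using hg HGx by auto
  have gc: "g \<in> carrier G" using hg(2) by (rule genG)
  have ihH: "inv h \<in> H" using hg(1) by (rule Hinv)
  have ga: "inv a \<otimes> inv g = inv g \<otimes> inv a"
  proof -
    have "inv a \<otimes> inv g = inv (g \<otimes> a)" by (rule inv_mult_group[OF gc aG, symmetric])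
    also have "\<dots> = inv (a \<otimes> g)" using commute_gen[OF hg(2)] by simp
    also have "\<dots> = inv g \<otimes> inv a" by (rule inv_mult_group[OF aG gc])
    finally show ?thesis .
  qed
  have "commutator G a x = (inv a \<otimes> inv g) \<otimes> inv h \<otimes> a \<otimes> h \<otimes> g"
    unfolding commutator_def hg(3) using aG hc gc by (simp add: inv_mult_group m_assoc)
  also have "\<dots> = inv g \<otimes> (phi (inv h) \<otimes> h) \<otimes> g"
    unfolding ga phi_def using aG hc gc by (simp add: m_assoc)
  also have "phi (inv h) \<otimes> h = d (inv h)"
    unfolding d_def using ab[OF phi_H[OF ihH] hg(1)] hc by simp
  moreover have "d (inv h) \<in> S" unfolding S_def using ihH by (rule imageI)
  ultimately show ?thesis using conj_S[OF hg(2)] by simp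
qed

lemma comm_S: "k \<in> S \<Longrightarrow> x \<in> carrier G \<Longrightarrow> commutator G k x \<in> S"
proof -
  assume k: "k \<in> S" and "x \<in> carrier G"
  then obtain h g where hg: "h \<in> H" "g \<in> generate G {a}" "x = h \<otimes> g" using decomp by blast
  have hc: "h \<in> carrier G" using hg HGx by auto
  have gc: "g \<in> carrier G" using hg(2) by (rule genG)
  have kH: "k \<in> H" using k SH by blast
  have kc: "k \<in> carrier G" using kH by (rule HGx)
  have hk: "inv h \<otimes> k \<otimes> h = k" using ab[OF kH hg(1)] hc kc by (simp add: m_assoc)
  have "commutator G k x = inv k \<otimes> (inv g \<otimes> (inv h \<otimes> k \<otimes> h) \<otimes> g)"
    unfolding commutator_def hg(3) using kc hc gc by (simp add: inv_mult_group m_assoc)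
  then have "commutator G k x = inv k \<otimes> (inv g \<otimes> k \<otimes> g)" using hk by simp
  then show ?thesis using Smul[OF Sinv[OF k] conj_S[OF hg(2) k]] by simp
qed

lemma engel_in_S: "x \<in> carrier G \<Longrightarrow> n \<ge> 1 \<Longrightarrow> engel_comm G a n x \<in> S"
proof (induction n)
  case 0 then show ?case by simp
next
  case (Suc n)
  show ?case
  proof (cases n)
    case 0 then show ?thesis using comm_a Suc by simp
  next
    case (Suc m) then show ?thesis using Suc.IH Suc.prems comm_S by simp
  qed
qed

lemma S_sink: "right_engel_sink G a S"
  unfolding right_engel_sink_def using SG engel_in_S by blast

lemma fix_one: "k \<in> S \<Longrightarrow> d k = \<one> \<Longrightarrow> k = \<one>"
proof -
  assume k: "k \<in> S" and dk: "d k = \<one>"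
  obtain h where h: "h \<in> H" "k = d h" using k unfolding S_def by blast
  have hc: "h \<in> carrier G" using h(1) by (rule HGx)
  have kc: "k \<in> carrier G" using k by (rule SG)
  have kH: "k \<in> H" using k SH by blast
  have pk: "phi k = k"
  proof -
    have "phi k = k \<otimes> (inv k \<otimes> phi k)" using kc phi_G[OF kc] by simp
    also have "\<dots> = k" using dk kc unfolding d_def by simp
    finally show ?thesis .
  qed
  have ph: "phi h = h \<otimes> k"
  proof -
    have "h \<otimes> k = phi h" unfolding h(2) d_def using hc phi_G[OF hc] by simp
    then show ?thesis by simp
  qed
  define c where "c j y = inv (a [^] (j::nat)) \<otimes> y \<otimes> a [^] j" for j y
  have ck: "c j k = k" for j
  proof (induction j)
    case 0 then show ?case unfolding c_def using kc by simp
  next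
    case (Suc j)
    have "c (Suc j) k = inv a \<otimes> c j k \<otimes> a"
      unfolding c_def using aG kc by (simp add: inv_mult_group m_assoc)
    then show ?case using Suc pk unfolding phi_def by simp
  qed
  have ch: "c j h = h \<otimes> k [^] j" for j
  proof (induction j)
    case 0 then show ?case unfolding c_def using hc by simp
  next
    case (Suc j)
    have e: "a [^] Suc j = a \<otimes> a [^] j" by (rule nat_pow_Suc2[OF aG])
    have "c (Suc j) h = c j (phi h)"
      unfolding c_def phi_def e using aG hc by (simp add: inv_mult_group m_assoc del: nat_pow_Suc)
    also have "\<dots> = c j h \<otimes> c j k"
      unfolding ph c_def using aG hc kc by (simp add: m_assoc del: nat_pow_Suc)
    also have "\<dots> = h \<otimes> k [^] Suc j" using Suc ck hc kc by (simp add: m_assoc)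
    finally show ?case .
  qed
  have "c (ord a) h = h" unfolding c_def using aG hc by simp
  then have "h \<otimes> k [^] ord a = h" using ch by simp
  then have "k [^] ord a = \<one>" using hc kc by simp
  then have d1: "ord k dvd ord a" using pow_eq_id[OF kc] by simp
  interpret GH: group "G\<lparr>carrier := H\<rparr>" by (rule subgroup_imp_group[OF subH])
  have "k [^]\<^bsub>G\<lparr>carrier := H\<rparr>\<^esub> order (G\<lparr>carrier := H\<rparr>) = \<one>\<^bsub>G\<lparr>carrier := H\<rparr>\<^esub>"
    by (rule GH.pow_order_eq_1) (use kH in simp)
  then have "k [^] card H = \<one>" unfolding order_def by (simp flip: nat_pow_consistent)
  then have d2: "ord k dvd card H" using pow_eq_id[OF kc] by simp
  have "ord k = 1" by (rule coprime_common_divisor_nat[OF cop d1 d2])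
  then show ?thesis using ord_eq_1[OF kc] by simp
qed

lemma d_S: "k \<in> S \<Longrightarrow> d k \<in> S"
  unfolding S_def using SH d_H by auto

lemma d_inj: "inj_on d S"
proof (rule inj_onI)
  fix y z assume y: "y \<in> S" and z: "z \<in> S" and e: "d y = d z"
  have yH: "y \<in> H" and zH: "z \<in> H" using y z SH by auto
  have izH: "inv z \<in> H" using zH by (rule Hinv)
  have "d (y \<otimes> inv z) = d y \<otimes> inv (d z)" using d_mult[OF yH izH] d_inv[OF zH] by simp
  also have "\<dots> = \<one>" using e d_H[OF zH] HGx by simp
  finally have "y \<otimes> inv z = \<one>"
    using fix_one[OF Smul[OF y Sinv[OF z]]] by simp
  then show "y = z" using yH zH HGx by (metis inv_equality inv_inv inv_closed)
qed

lemma S_min: "right_engel_sink G a T \<Longrightarrow> S \<subseteq> T"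
proof
  fix k assume T: "right_engel_sink G a T" and k: "k \<in> S"
  obtain u where u: "u \<in> H" "k = d u" using k unfolding S_def by blast
  have uc: "u \<in> carrier G" using u(1) by (rule HGx)
  have iuc: "inv u \<in> carrier G" using uc by simp
  define x where "x = a \<otimes> inv u"
  have xc: "x \<in> carrier G" unfolding x_def using aG uc by simp
  have ix: "inv x = u \<otimes> inv a" unfolding x_def using inv_mult_group[OF aG iuc] uc by simp
  have c1: "commutator G a x = k"
  proof -
    have "commutator G a x = inv a \<otimes> (u \<otimes> inv a) \<otimes> a \<otimes> (a \<otimes> inv u)"
      unfolding commutator_def ix unfolding x_def ..
    also have "\<dots> = phi u \<otimes> inv u"
      unfolding phi_def using aG uc by (simp add: m_assoc)
    also have "\<dots> = inv u \<otimes> phi u" by (rule ab[OF phi_H[OF u(1)] Hinv[OF u(1)]])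
    finally show ?thesis unfolding u(2) d_def .
  qed
  have c2: "commutator G y x = d y" if yH: "y \<in> H" for y
  proof -
    have yc: "y \<in> carrier G" using yH by (rule HGx)
    have "commutator G y x = inv y \<otimes> (u \<otimes> inv a) \<otimes> y \<otimes> (a \<otimes> inv u)"
      unfolding commutator_def ix unfolding x_def ..
    also have "\<dots> = inv y \<otimes> (u \<otimes> phi y \<otimes> inv u)"
      unfolding phi_def using aG uc yc by (simp add: m_assoc)
    also have "u \<otimes> phi y = phi y \<otimes> u" by (rule ab[OF u(1) phi_H[OF yH]])
    also have "phi y \<otimes> u \<otimes> inv u = phi y" using phi_G[OF yc] uc by (simp add: m_assoc)
    finally show ?thesis unfolding d_def .
  qed
  have en: "engel_comm G a (Suc n) x = (d^^n) k" for n
  proof (induction n)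
    case 0 then show ?case using c1 by simp
  next
    case (Suc n)
    have inS: "(d^^n) k \<in> S" using funpow_in[of S d k n] d_S k by blast
    have inH: "(d^^n) k \<in> H" using inS SH by blast
    have "engel_comm G a (Suc (Suc n)) x = commutator G (engel_comm G a (Suc n) x) x" by simp
    also have "\<dots> = commutator G ((d^^n) k) x" using Suc.IH by simp
    also have "\<dots> = d ((d^^n) k)" by (rule c2[OF inH])
    finally show ?case by simp
  qed
  have finS: "finite S" by (rule finite_subset[OF subgroup.subset[OF S_sub] fin])
  have dS': "\<forall>x\<in>S. d x \<in> S" by (simp add: d_S)
  obtain p where p: "p > 0" "(d^^p) k = k" using periodic_aux[OF finS dS' d_inj k] by blast
  have "\<forall>x\<in>carrier G. \<exists>N. \<forall>n\<ge>N. engel_comm G a n x \<in> T" using T unfolding right_engel_sink_def by (rule conjunct2)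
  then obtain N where N: "\<forall>n\<ge>N. engel_comm G a n x \<in> T" using xc by blast
  have "N \<le> p * N" using p(1) by (cases p) auto
  then have "N \<le> Suc (p*N)" by linarith
  then have "engel_comm G a (Suc (p*N)) x \<in> T" using N by blast
  moreover have "engel_comm G a (Suc (p*N)) x = k" using en funpow_mult_period[OF p(2)] by simp
  ultimately show "k \<in> T" by simp
qed

lemma main: "min_right_engel_sink G a = S"
  unfolding min_right_engel_sink_def
proof (rule the_equality)
  show "right_engel_sink G a S \<and> (\<forall>T. right_engel_sink G a T \<longrightarrow> S \<subseteq> T)"
    using S_sink S_min by blast
next
  fix S' assume "right_engel_sink G a S' \<and> (\<forall>T. right_engel_sink G a T \<longrightarrow> S' \<subseteq> T)"
  then show "S' = S" using S_sink S_min by blast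
qed

end

theorem lemma2p2:
  fixes G (structure) and H :: "'a set" and a :: 'a
  assumes "group G"
    and "finite (carrier G)"
    and "H \<lhd> G"
    and "\<forall>x\<in>H. \<forall>y\<in>H. x \<otimes> y = y \<otimes> x"
    and "a \<in> carrier G"
    and "carrier G = H <#> generate G {a}"
    and "coprime (group.ord G a) (card H)"
  shows "min_right_engel_sink G a = comm_subgroup_elem G H a"
proof -
  have ab: "\<And>x y. x \<in> H \<Longrightarrow> y \<in> H \<Longrightarrow> x \<otimes> y = y \<otimes> x" using assms(4) by blast
  interpret E: engel_setup G H a
    by (rule engel_setup.intro[OF assms(1) engel_setup_axioms.intro[OF assms(3) ab assms(5) assms(6) assms(7) assms(2)]])
  show ?thesis using E.main E.comm_eq by simp
qed

end
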